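(* Let $Q=2^q$, $n\ge1$, $\gamma\ge0$, $\varepsilon\in[0,1]$, $\delta_1,\delta_2\ge0$, and let $A\subseteq[Q]^n$, $B\subseteq[Q]^n$ be $\gamma$-uniform with $|A|\ge Q^{n(1-\delta_1)}$ and $|B|\ge Q^{n(1-\delta_2)}$. Let $\delta>0$ be arbitrarily small. If $W$ is drawn from $\mathcal{W}_{Q,\varepsilon}$, then with probability at least $1/2$, $$\mathcal{R}^{(0)}_{W,n}\ge 2q\left(1-\left(\frac{\delta_1+\delta_2}{2}+2(1+\gamma)\varepsilon+\delta\right)\right)-2.$$
   Context: Fix an integer $q\ge1$, $Q=2^q$, $[Q]=\{1,\dots,Q\}$, and a symbol $\phi\notin[Q]$. A channel is $W=(W_1,W_2)$ with $W_i:[Q]^2\to[Q]\cup\{\phi\}$; $W^{(n)}_i(x,y)=(W_i(x_1,y_1),\dots,W_i(x_n,y_n))$ for $x,y\in[Q]^n$. A zero-error code of block length $n$ with message sets $[M_1],[M_2]$ consists of encoders $E_i:[M_i]\to[Q]^n$ and decoders $D_i:([Q]\cup\{\phi\})^n\to[M_i]$ with $D_i(W^{(n)}_i(E_1(m_1),E_2(m_2)))=m_i$ for $i=1,2$ and all message pairs; $\mathcal{R}^{(0)}_{W,n}$ is the supremum of $\frac1n\log_2(M_1M_2)$ over such codes. $\mathcal{W}_{Q,\varepsilon}$ is the distribution over channels in which, independently for every $(x,y)\in[Q]^2$, $W(x,y)=(\phi,\phi)$ with probability $\varepsilon$ and $W(x,y)=(x,y)$ otherwise. A pair $(x^{(n)},y^{(n)})\in[Q]^n\times[Q]^n$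 is $\gamma$-uniform if for every $(\alpha,\beta)\in[Q]^2$, $(1-\gamma)\frac{n}{Q^2}\le|\{i\in[n]:(x_i,y_i)=(\alpha,\beta)\}|\le(1+\gamma)\frac{n}{Q^2}$; sets $A,B\subseteq[Q]^n$ are $\gamma$-uniform if every $(x^{(n)},y^{(n)})\in A\times B$ is $\gamma$-uniform. *)

theory Defs
  imports "HOL-Probability.Probability"
begin

text \<open>The alphabet [Q] = {1..Q}. Output symbols of type nat option; the erasure
  symbol phi is None, an alphabet symbol a is Some a.\<close>

type_synonym channel = "nat \<Rightarrow> nat \<Rightarrow> nat option \<times> nat option"

definition alph :: "nat \<Rightarrow> nat set" where
  "alph Q = {1..Q}"

definition words :: "nat \<Rightarrow> nat \<Rightarrow> nat list set" where
  "words Q n = {x. length x = n \<and> set x \<subseteq> alph Q}"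

definition out_words :: "nat \<Rightarrow> nat \<Rightarrow> nat option list set" where
  "out_words Q n = {v. length v = n \<and> (\<forall>a. Some a \<in> set v \<longrightarrow> a \<in> alph Q)}"

definition chan_n :: "channel \<Rightarrow> nat \<Rightarrow> nat list \<Rightarrow> nat list \<Rightarrow> nat option list" where
  "chan_n W i x y = map2 (\<lambda>a b. if i = 1 then fst (W a b) else snd (W a b)) x y"

definition zero_error_code ::
  "nat \<Rightarrow> channel \<Rightarrow> nat \<Rightarrow> nat \<Rightarrow> nat \<Rightarrow>
   (nat \<Rightarrow> nat list) \<Rightarrow> (nat \<Rightarrow> nat list) \<Rightarrow>
   (nat option list \<Rightarrow> nat) \<Rightarrow> (nat option list \<Rightarrow> nat) \<Rightarrow> bool" where
  "zero_error_code Q W n M1 M2 E1 E2 D1 D2 \<longleftrightarrow>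
     M1 \<ge> 1 \<and> M2 \<ge> 1 \<and>
     (\<forall>m\<in>{1..M1}. E1 m \<in> words Q n) \<and>
     (\<forall>m\<in>{1..M2}. E2 m \<in> words Q n) \<and>
     (\<forall>v\<in>out_words Q n. D1 v \<in> {1..M1} \<and> D2 v \<in> {1..M2}) \<and>
     (\<forall>m1\<in>{1..M1}. \<forall>m2\<in>{1..M2}.
        D1 (chan_n W 1 (E1 m1) (E2 m2)) = m1 \<and>
        D2 (chan_n W 2 (E1 m1) (E2 m2)) = m2)"

definition zero_error_rate :: "nat \<Rightarrow> channel \<Rightarrow> nat \<Rightarrow> real" where
  "zero_error_rate Q W n =
     Sup {log 2 (real (M1 * M2)) / real n | M1 M2.
            \<exists>E1 E2 D1 D2. zero_error_code Q W n M1 M2 E1 E2 D1 D2}"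

definition erasure_channel :: "(nat \<times> nat \<Rightarrow> bool) \<Rightarrow> channel" where
  "erasure_channel S x y = (if S (x, y) then (None, None) else (Some x, Some y))"

text \<open>The distribution W_{Q,eps}: independent erasure of each pair in [Q]^2 with prob. eps.
  Random erasure pattern (False outside [Q]^2, irrelevant there).\<close>
definition erasure_pattern_pmf :: "nat \<Rightarrow> real \<Rightarrow> (nat \<times> nat \<Rightarrow> bool) pmf" where
  "erasure_pattern_pmf Q \<epsilon> = Pi_pmf (alph Q \<times> alph Q) False (\<lambda>_. bernoulli_pmf \<epsilon>)"

definition gamma_uniform_pair :: "nat \<Rightarrow> nat \<Rightarrow> real \<Rightarrow> nat list \<Rightarrow> nat list \<Rightarrow> bool" where
  "gamma_uniform_pair Q n \<gamma> x y \<longleftrightarrow>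
     (\<forall>\<alpha>\<in>alph Q. \<forall>\<beta>\<in>alph Q.
        let c = real (card {i. i < n \<and> x ! i = \<alpha> \<and> y ! i = \<beta>}) in
        (1 - \<gamma>) * real n / real Q ^ 2 \<le> c \<and> c \<le> (1 + \<gamma>) * real n / real Q ^ 2)"

definition gamma_uniform_sets :: "nat \<Rightarrow> nat \<Rightarrow> real \<Rightarrow> nat list set \<Rightarrow> nat list set \<Rightarrow> bool" where
  "gamma_uniform_sets Q n \<gamma> A B \<longleftrightarrow> (\<forall>x\<in>A. \<forall>y\<in>B. gamma_uniform_pair Q n \<gamma> x y)"

end

theory Submission
  imports Defs
begin

definition hdist :: "nat \<Rightarrow> nat list \<Rightarrow> nat list \<Rightarrow> nat" where
  "hdist n x y = card {i. i < n \<and> x ! i \<noteq> y ! i}"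

definition hball :: "nat \<Rightarrow> nat \<Rightarrow> real \<Rightarrow> nat list \<Rightarrow> nat list set" where
  "hball Q n t a = {z \<in> words Q n. real (hdist n a z) \<le> t}"

definition hsep :: "nat \<Rightarrow> real \<Rightarrow> nat list set \<Rightarrow> bool" where
  "hsep n t A \<longleftrightarrow> (\<forall>x\<in>A. \<forall>y\<in>A. x \<noteq> y \<longrightarrow> real (hdist n x y) > t)"

lemma hdist_sym: "hdist n x y = hdist n y x"
  unfolding hdist_def by (metis (mono_tags, lifting))

lemma hdist_self: "hdist n x x = 0"
  unfolding hdist_def by simp

lemma finite_words: "finite (words Q n)"
proof -
  have "words Q n = {xs. set xs \<subseteq> alph Q \<and> length xs = n}" unfolding words_def by auto
  then show ?thesis using finite_lists_length_eq[of "alph Q" n] by (simp add: alph_def)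
qed

lemma hball_card:
  assumes a: "a \<in> words Q n" and t: "t \<ge> 0" and Q: "Q \<ge> 1"
  shows "real (card (hball Q n t a)) \<le> 2 ^ n * real Q powr t"
proof -
  define Ds where "Ds = {D. D \<subseteq> {..<n} \<and> real (card D) \<le> t}"
  define T where "T = Sigma Ds (\<lambda>D. PiE D (\<lambda>_. alph Q))"
  define f where "f = (\<lambda>z. ({i. i < n \<and> a ! i \<noteq> z ! i}, restrict (\<lambda>i. z ! i) {i. i < n \<and> a ! i \<noteq> z ! i}))"
  have finDs: "finite Ds" unfolding Ds_def by (rule finite_subset[of _ "Pow {..<n}"]) auto
  have finD: "finite D" if "D \<in> Ds" for D
    using that unfolding Ds_def by (metis (no_types, lifting) finite_lessThan finite_subset mem_Collect_eq)
  have finT: "finite T" unfolding T_def using finDs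
    by (intro finite_SigmaI finite_PiE) (auto simp: alph_def finD)
  have inj: "inj_on f (hball Q n t a)"
  proof (rule inj_onI)
    fix z1 z2 assume z1: "z1 \<in> hball Q n t a" and z2: "z2 \<in> hball Q n t a" and eq: "f z1 = f z2"
    let ?D1 = "{i. i < n \<and> a ! i \<noteq> z1 ! i}"
    let ?D2 = "{i. i < n \<and> a ! i \<noteq> z2 ! i}"
    have D: "?D1 = ?D2" using arg_cong[OF eq, of fst] unfolding f_def by (simp only: fst_conv)
    have R: "restrict (\<lambda>i. z1 ! i) ?D1 = restrict (\<lambda>i. z2 ! i) ?D2"
      using arg_cong[OF eq, of snd] unfolding f_def by (simp only: snd_conv)
    have l1: "length z1 = n" and l2: "length z2 = n" using z1 z2 by (auto simp: hball_def words_def)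
    show "z1 = z2"
    proof (rule nth_equalityI)
      show "length z1 = length z2" using l1 l2 by simp
      fix i assume "i < length z1"
      then have i: "i < n" using l1 by simp
      show "z1 ! i = z2 ! i"
      proof (cases "i \<in> ?D1")
        case True
        have "restrict (\<lambda>i. z1 ! i) ?D1 i = restrict (\<lambda>i. z2 ! i) ?D2 i" using R by (rule fun_cong)
        moreover have "i \<in> ?D2" using True D by blast
        ultimately show ?thesis using True by (simp only: restrict_apply') 
      next
        case False
        then have "i \<notin> ?D2" using D by simp
        have "a ! i = z1 ! i" using False i by blast
        moreover have "a ! i = z2 ! i" using \<open>i \<notin> ?D2\<close> i by blast
        ultimately show ?thesis by simp
      qed
    qed
  qed
  have sub: "f ` hball Q n t a \<subseteq> T"
  proof
    fix w assume "w \<in> f ` hball Q n t a"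
    then obtain z where z: "z \<in> hball Q n t a" and w: "w = f z" by auto
    have zw: "length z = n" "set z \<subseteq> alph Q" and ht: "real (hdist n a z) \<le> t"
      using z by (auto simp: hball_def words_def)
    show "w \<in> T" unfolding T_def Ds_def w f_def
      using ht zw by (auto simp: hdist_def PiE_def Pi_def)
  qed
  have "card (hball Q n t a) \<le> card T"
    using card_inj_on_le[OF inj sub finT] .
  then have "real (card (hball Q n t a)) \<le> real (card T)" by simp
  also have "real (card T) = (\<Sum>D\<in>Ds. real Q ^ card D)"
    unfolding T_def using finDs
    by (simp add: card_SigmaI card_PiE alph_def finite_PiE finD)
  also have "\<dots> \<le> (\<Sum>D\<in>Ds. real Q powr t)"
  proof (rule sum_mono)
    fix D assume "D \<in> Ds"
    then have "real (card D) \<le> t" by (simp add: Ds_def)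
    then have "real Q powr real (card D) \<le> real Q powr t" using Q by (intro powr_mono) auto
    then show "real Q ^ card D \<le> real Q powr t" using Q by (simp add: powr_realpow)
  qed
  also have "\<dots> = real (card Ds) * real Q powr t" by simp
  also have "\<dots> \<le> 2 ^ n * real Q powr t"
  proof -
    have "card Ds \<le> card (Pow {..<n})" unfolding Ds_def by (rule card_mono) auto
    then have "real (card Ds) \<le> 2 ^ n" by (simp add: card_Pow)
    then show ?thesis by (intro mult_right_mono) auto
  qed
  finally show ?thesis .
qed

lemma greedy:
  assumes "finite A" and "A \<subseteq> words Q n" and "t \<ge> 0"
  shows "\<exists>A'\<subseteq>A. hsep n t A' \<and> A \<subseteq> (\<Union>a\<in>A'. hball Q n t a)"
  using assms
proof (induction A rule: finite_induct)
  case empty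
  then show ?case by (auto simp: hsep_def)
next
  case (insert x F)
  then obtain F' where F': "F' \<subseteq> F" "hsep n t F'" "F \<subseteq> (\<Union>a\<in>F'. hball Q n t a)" by auto
  have xw: "x \<in> words Q n" using insert by auto
  show ?case
  proof (cases "\<exists>a\<in>F'. real (hdist n a x) \<le> t")
    case True
    then obtain a where "a \<in> F'" "real (hdist n a x) \<le> t" by auto
    then have "x \<in> hball Q n t a" using xw by (simp add: hball_def)
    then show ?thesis using F' \<open>a \<in> F'\<close> by (intro exI[of _ F']) auto
  next
    case False
    have "hsep n t (insert x F')"
      unfolding hsep_def
    proof (intro ballI impI)
      fix u v assume u: "u \<in> insert x F'" and v: "v \<in> insert x F'" and uv: "u \<noteq> v"
      have far: "real (hdist n a x) > t" if "a \<in> F'" for a using False that by auto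
      show "real (hdist n u v) > t"
      proof (cases "u = x")
        case True
        then have "v \<in> F'" using v uv by auto
        then show ?thesis using far True hdist_sym by metis
      next
        case False
        then have uF: "u \<in> F'" using u by auto
        show ?thesis
        proof (cases "v = x")
          case True then show ?thesis using far uF by simp
        next
          case False then have "v \<in> F'" using v by auto
          then show ?thesis using F'(2) uF uv unfolding hsep_def by blast
        qed
      qed
    qed
    moreover have "x \<in> hball Q n t x" using xw insert.prems by (simp add: hball_def hdist_self)
    moreover have "insert x F' \<subseteq> insert x F" using F'(1) by blast
    moreover have "insert x F \<subseteq> (\<Union>a\<in>insert x F'. hball Q n t a)"
      using F'(3) \<open>x \<in> hball Q n t x\<close> by blast
    ultimately show ?thesis by blast
  qed
qed

lemma greedy_card:
  assumes "finite A" and "A \<subseteq> words Q n" and "t \<ge> 0" and "Q \<ge> 1"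
  shows "\<exists>A'\<subseteq>A. hsep n t A' \<and> real (card A) \<le> real (card A') * (2 ^ n * real Q powr t)"
proof -
  obtain A' where A': "A' \<subseteq> A" "hsep n t A'" "A \<subseteq> (\<Union>a\<in>A'. hball Q n t a)"
    using greedy[OF assms(1-3)] by auto
  have finA': "finite A'" using A'(1) assms(1) finite_subset by auto
  have "card A \<le> card (\<Union>a\<in>A'. hball Q n t a)"
  proof (rule card_mono[OF _ A'(3)])
    have "(\<Union>a\<in>A'. hball Q n t a) \<subseteq> words Q n" by (auto simp: hball_def)
    then show "finite (\<Union>a\<in>A'. hball Q n t a)" using finite_words finite_subset by blast
  qed
  also have "\<dots> \<le> (\<Sum>a\<in>A'. card (hball Q n t a))" by (rule card_UN_le[OF finA'])
  finally have "real (card A) \<le> (\<Sum>a\<in>A'. real (card (hball Q n t a)))" by (simp flip: of_nat_sum)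
  also have "\<dots> \<le> (\<Sum>a\<in>A'. 2 ^ n * real Q powr t)"
    using A'(1) assms by (intro sum_mono hball_card) auto
  also have "\<dots> = real (card A') * (2 ^ n * real Q powr t)" by simp
  finally show ?thesis using A' by auto
qed

lemma prob_part:
  fixes Q :: nat and \<epsilon> c :: real
  assumes e0: "0 \<le> \<epsilon>" and e1: "\<epsilon> \<le> 1" and c0: "c > 0" and ce: "2 * \<epsilon> * real Q ^ 2 \<le> c"
  shows "measure_pmf.prob (erasure_pattern_pmf Q \<epsilon>) {S. real (card {p \<in> alph Q \<times> alph Q. S p}) \<le> c} \<ge> 1/2"
proof -
  let ?M = "erasure_pattern_pmf Q \<epsilon>"
  let ?P = "alph Q \<times> alph Q"
  define K where "K = (\<lambda>S. real (card {p \<in> ?P. S p}))"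
  have fin: "finite ?P" by (simp add: alph_def)
  have cardP: "card ?P = Q^2" by (simp add: alph_def card_cartesian_product power2_eq_square)
  have Ksum: "K S = (\<Sum>p\<in>?P. if S p then 1 else 0)" for S
    unfolding K_def using fin by (simp add: sum.If_cases Int_def conj_commute)
  have int1: "integrable ?M (\<lambda>S. if S p then 1 else 0 :: real)" for p
    by (rule measure_pmf.integrable_const_bound[where B=1]) auto
  have comp: "measure_pmf.prob ?M {S. S p} = \<epsilon>" if "p \<in> ?P" for p
  proof -
    have "measure_pmf.prob ?M {S. S p} = measure_pmf.prob (map_pmf (\<lambda>f. f p) ?M) {True}"
      by (simp add: measure_map_pmf vimage_def)
    also have "map_pmf (\<lambda>f. f p) ?M = bernoulli_pmf \<epsilon>"
      unfolding erasure_pattern_pmf_def using Pi_pmf_component[OF fin, of p False "\<lambda>_. bernoulli_pmf \<epsilon>"] that by simp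
    finally show ?thesis using e0 e1 by (simp add: measure_pmf_single)
  qed
  have EK: "measure_pmf.expectation ?M K = \<epsilon> * real Q ^ 2"
  proof -
    have "measure_pmf.expectation ?M K = (\<Sum>p\<in>?P. measure_pmf.expectation ?M (\<lambda>S. if S p then 1 else 0 :: real))"
      unfolding Ksum by (rule Bochner_Integration.integral_sum[OF int1])
    also have "\<dots> = (\<Sum>p\<in>?P. \<epsilon>)"
    proof (rule sum.cong[OF refl])
      fix p assume "p \<in> ?P"
      have "(\<lambda>S. if S p then 1 else 0 :: real) = indicator {S. S p}" by (auto simp: indicator_def)
      then show "measure_pmf.expectation ?M (\<lambda>S. if S p then 1 else 0 :: real) = \<epsilon>"
        using comp[OF \<open>p \<in> ?P\<close>] by simp
    qed
    also have "\<dots> = \<epsilon> * real Q ^ 2" using cardP by simp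
    finally show ?thesis .
  qed
  have intK: "integrable ?M K" unfolding Ksum by (intro Bochner_Integration.integrable_sum int1)
  have mk: "measure_pmf.prob ?M {S \<in> space ?M. K S \<ge> c} \<le> measure_pmf.expectation ?M K / c"
    by (rule integral_Markov_inequality_measure[OF intK, where A="{}"]) (auto simp: K_def c0)
  also have "\<dots> \<le> 1/2" using EK c0 ce by (simp add: divide_simps)
  finally have h: "measure_pmf.prob ?M {S. K S \<ge> c} \<le> 1/2" by simp
  have "measure_pmf.prob ?M {S. K S \<le> c} \<ge> measure_pmf.prob ?M (UNIV - {S. K S \<ge> c})"
    by (rule measure_pmf.finite_measure_mono) auto
  moreover have "measure_pmf.prob ?M (UNIV - {S. K S \<ge> c}) = 1 - measure_pmf.prob ?M {S. K S \<ge> c}"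
    using measure_pmf.prob_compl[of "{S. K S \<ge> c}" ?M] by simp
  ultimately show ?thesis using h unfolding K_def by simp
qed


lemma chan1_nth:
  assumes "i < length x" "length y = length x"
  shows "chan_n (erasure_channel S) 1 x y ! i = (if S (x!i, y!i) then None else Some (x!i))"
  using assms by (simp add: chan_n_def erasure_channel_def)

lemma chan2_nth:
  assumes "i < length x" "length y = length x"
  shows "chan_n (erasure_channel S) 2 x y ! i = (if S (x!i, y!i) then None else Some (y!i))"
  using assms by (simp add: chan_n_def erasure_channel_def)

lemma decode1:
  assumes "x \<in> words Q n" "x' \<in> words Q n" "y \<in> words Q n" "y' \<in> words Q n"
    and eq: "chan_n (erasure_channel S) 1 x y = chan_n (erasure_channel S) 1 x' y'"
  shows "{i. i < n \<and> x!i \<noteq> x'!i} \<subseteq> {i. i < n \<and> S (x!i, y!i)}"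
proof
  fix i assume i: "i \<in> {i. i < n \<and> x!i \<noteq> x'!i}"
  have l: "length x = n" "length x' = n" "length y = n" "length y' = n" using assms by (auto simp: words_def)
  have "chan_n (erasure_channel S) 1 x y ! i = chan_n (erasure_channel S) 1 x' y' ! i" using eq by simp
  moreover have "chan_n (erasure_channel S) 1 x y ! i = (if S (x!i, y!i) then None else Some (x!i))"
    using i l by (intro chan1_nth) auto
  moreover have "chan_n (erasure_channel S) 1 x' y' ! i = (if S (x'!i, y'!i) then None else Some (x'!i))"
    using i l by (intro chan1_nth) auto
  ultimately have "(if S (x!i, y!i) then None else Some (x!i)) = (if S (x'!i, y'!i) then None else Some (x'!i))"
    by simp
  then show "i \<in> {i. i < n \<and> S (x!i, y!i)}" using i by (auto split: if_splits)
qed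

lemma decode2:
  assumes "x \<in> words Q n" "x' \<in> words Q n" "y \<in> words Q n" "y' \<in> words Q n"
    and eq: "chan_n (erasure_channel S) 2 x y = chan_n (erasure_channel S) 2 x' y'"
  shows "{i. i < n \<and> y!i \<noteq> y'!i} \<subseteq> {i. i < n \<and> S (x!i, y!i)}"
proof
  fix i assume i: "i \<in> {i. i < n \<and> y!i \<noteq> y'!i}"
  have l: "length x = n" "length x' = n" "length y = n" "length y' = n" using assms by (auto simp: words_def)
  have "chan_n (erasure_channel S) 2 x y ! i = chan_n (erasure_channel S) 2 x' y' ! i" using eq by simp
  moreover have "chan_n (erasure_channel S) 2 x y ! i = (if S (x!i, y!i) then None else Some (y!i))"
    using i l by (intro chan2_nth) auto
  moreover have "chan_n (erasure_channel S) 2 x' y' ! i = (if S (x'!i, y'!i) then None else Some (y'!i))"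
    using i l by (intro chan2_nth) auto
  ultimately have "(if S (x!i, y!i) then None else Some (y!i)) = (if S (x'!i, y'!i) then None else Some (y'!i))"
    by simp
  then show "i \<in> {i. i < n \<and> S (x!i, y!i)}" using i by (auto split: if_splits)
qed

lemma erase_count:
  assumes x: "x \<in> words Q n" and y: "y \<in> words Q n" and g: "gamma_uniform_pair Q n \<gamma> x y"
  shows "real (card {i. i < n \<and> S (x!i, y!i)}) \<le>
           real (card {p \<in> alph Q \<times> alph Q. S p}) * ((1 + \<gamma>) * real n / real Q ^ 2)"
proof -
  let ?P = "{p \<in> alph Q \<times> alph Q. S p}"
  let ?C = "\<lambda>p. {i. i < n \<and> x!i = fst p \<and> y!i = snd p}"
  have finP: "finite ?P" by (simp add: alph_def)
  have "{i. i < n \<and> S (x!i, y!i)} \<subseteq> (\<Union>p\<in>?P. ?C p)"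
  proof
    fix i assume i: "i \<in> {i. i < n \<and> S (x!i, y!i)}"
    have "x!i \<in> alph Q" "y!i \<in> alph Q" using i x y by (auto simp: words_def)
    then have "(x!i, y!i) \<in> ?P" using i by auto
    then show "i \<in> (\<Union>p\<in>?P. ?C p)" using i by force
  qed
  moreover have "finite (\<Union>p\<in>?P. ?C p)" by (rule finite_UN_I[OF finP]) auto
  ultimately have "card {i. i < n \<and> S (x!i, y!i)} \<le> card (\<Union>p\<in>?P. ?C p)"
    by (intro card_mono)
  also have "\<dots> \<le> (\<Sum>p\<in>?P. card (?C p))" by (rule card_UN_le[OF finP])
  finally have "real (card {i. i < n \<and> S (x!i, y!i)}) \<le> (\<Sum>p\<in>?P. real (card (?C p)))"
    by (simp flip: of_nat_sum)
  also have "\<dots> \<le> (\<Sum>p\<in>?P. (1 + \<gamma>) * real n / real Q ^ 2)"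
  proof (rule sum_mono)
    fix p assume "p \<in> ?P"
    then have "fst p \<in> alph Q" "snd p \<in> alph Q" by auto
    then show "real (card (?C p)) \<le> (1 + \<gamma>) * real n / real Q ^ 2"
      using g unfolding gamma_uniform_pair_def Let_def by blast
  qed
  also have "\<dots> = real (card ?P) * ((1 + \<gamma>) * real n / real Q ^ 2)" by simp
  finally show ?thesis .
qed

lemma code_exists:
  assumes fA: "finite A1" "A1 \<noteq> {}" and fB: "finite B1" "B1 \<noteq> {}"
    and AW: "A1 \<subseteq> words Q n" and BW: "B1 \<subseteq> words Q n"
    and i1: "\<And>x x' y y'. x \<in> A1 \<Longrightarrow> x' \<in> A1 \<Longrightarrow> y \<in> B1 \<Longrightarrow> y' \<in> B1 \<Longrightarrow>
               chan_n W 1 x y = chan_n W 1 x' y' \<Longrightarrow> x = x'"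
    and i2: "\<And>x x' y y'. x \<in> A1 \<Longrightarrow> x' \<in> A1 \<Longrightarrow> y \<in> B1 \<Longrightarrow> y' \<in> B1 \<Longrightarrow>
               chan_n W 2 x y = chan_n W 2 x' y' \<Longrightarrow> y = y'"
  shows "\<exists>E1 E2 D1 D2. zero_error_code Q W n (card A1) (card B1) E1 E2 D1 D2"
proof -
  define M1 where "M1 = card A1"
  define M2 where "M2 = card B1"
  obtain h1 where h1: "bij_betw h1 {1..M1} A1" using ex_bij_betw_nat_finite_1[OF fA(1)] M1_def by auto
  obtain h2 where h2: "bij_betw h2 {1..M2} B1" using ex_bij_betw_nat_finite_1[OF fB(1)] M2_def by auto
  have M1: "M1 \<ge> 1" using fA M1_def by (simp add: Suc_le_eq card_gt_0_iff)
  have M2: "M2 \<ge> 1" using fB M2_def by (simp add: Suc_le_eq card_gt_0_iff)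
  have h1A: "h1 m \<in> A1" if "m \<in> {1..M1}" for m using h1 that bij_betw_apply by fast
  have h2B: "h2 m \<in> B1" if "m \<in> {1..M2}" for m using h2 that bij_betw_apply by fast
  have h1i: "inj_on h1 {1..M1}" using h1 bij_betw_def by blast
  have h2i: "inj_on h2 {1..M2}" using h2 bij_betw_def by blast
  define P1 where "P1 = (\<lambda>v m1. m1 \<in> {1..M1} \<and> (\<exists>m2\<in>{1..M2}. chan_n W 1 (h1 m1) (h2 m2) = v))"
  define P2 where "P2 = (\<lambda>v m2. m2 \<in> {1..M2} \<and> (\<exists>m1\<in>{1..M1}. chan_n W 2 (h1 m1) (h2 m2) = v))"
  define D1 where "D1 = (\<lambda>v. if \<exists>m. P1 v m then SOME m. P1 v m else 1)"
  define D2 where "D2 = (\<lambda>v. if \<exists>m. P2 v m then SOME m. P2 v m else 1)"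
  have D1r: "D1 v \<in> {1..M1}" for v
  proof (cases "\<exists>m. P1 v m")
    case True then have "P1 v (SOME m. P1 v m)" by (rule someI_ex)
    then show ?thesis using True by (simp add: D1_def P1_def)
  next
    case False then show ?thesis using M1 by (auto simp: D1_def)
  qed
  have D2r: "D2 v \<in> {1..M2}" for v
  proof (cases "\<exists>m. P2 v m")
    case True then have "P2 v (SOME m. P2 v m)" by (rule someI_ex)
    then show ?thesis using True by (simp add: D2_def P2_def)
  next
    case False then show ?thesis using M2 by (auto simp: D2_def)
  qed
  have D1c: "D1 (chan_n W 1 (h1 m1) (h2 m2)) = m1" if m1: "m1 \<in> {1..M1}" and m2: "m2 \<in> {1..M2}" for m1 m2
  proof -
    let ?v = "chan_n W 1 (h1 m1) (h2 m2)"
    have ex: "\<exists>m. P1 ?v m" using m1 m2 unfolding P1_def by blast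
    then have "P1 ?v (SOME m. P1 ?v m)" by (rule someI_ex)
    then obtain m2' where a: "(SOME m. P1 ?v m) \<in> {1..M1}" and b: "m2' \<in> {1..M2}"
      and c: "chan_n W 1 (h1 (SOME m. P1 ?v m)) (h2 m2') = ?v" unfolding P1_def by blast
    have "h1 (SOME m. P1 ?v m) = h1 m1" using i1[OF h1A[OF a] h1A[OF m1] h2B[OF b] h2B[OF m2] c] .
    then have "(SOME m. P1 ?v m) = m1" using h1i a m1 inj_on_eq_iff by metis
    then show ?thesis using ex by (simp add: D1_def)
  qed
  have D2c: "D2 (chan_n W 2 (h1 m1) (h2 m2)) = m2" if m1: "m1 \<in> {1..M1}" and m2: "m2 \<in> {1..M2}" for m1 m2
  proof -
    let ?v = "chan_n W 2 (h1 m1) (h2 m2)"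
    have ex: "\<exists>m. P2 ?v m" using m1 m2 unfolding P2_def by blast
    then have "P2 ?v (SOME m. P2 ?v m)" by (rule someI_ex)
    then obtain m1' where a: "(SOME m. P2 ?v m) \<in> {1..M2}" and b: "m1' \<in> {1..M1}"
      and c: "chan_n W 2 (h1 m1') (h2 (SOME m. P2 ?v m)) = ?v" unfolding P2_def by blast
    have "h2 (SOME m. P2 ?v m) = h2 m2" using i2[OF h1A[OF b] h1A[OF m1] h2B[OF a] h2B[OF m2] c] .
    then have "(SOME m. P2 ?v m) = m2" using h2i a m2 inj_on_eq_iff by metis
    then show ?thesis using ex by (simp add: D2_def)
  qed
  have "zero_error_code Q W n M1 M2 h1 h2 D1 D2"
    unfolding zero_error_code_def using M1 M2 D1r D2r D1c D2c h1A h2B AW BW by blast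
  then show ?thesis unfolding M1_def M2_def by blast
qed

lemma code_bound:
  assumes "zero_error_code Q W n M1 M2 E1 E2 D1 D2"
  shows "M1 \<le> card (words Q n) \<and> M2 \<le> card (words Q n)"
proof -
  have c: "M1 \<ge> 1" "M2 \<ge> 1" "\<forall>m\<in>{1..M1}. E1 m \<in> words Q n" "\<forall>m\<in>{1..M2}. E2 m \<in> words Q n"
    "\<forall>m1\<in>{1..M1}. \<forall>m2\<in>{1..M2}. D1 (chan_n W 1 (E1 m1) (E2 m2)) = m1 \<and> D2 (chan_n W 2 (E1 m1) (E2 m2)) = m2"
    using assms unfolding zero_error_code_def by auto
  have "inj_on E1 {1..M1}"
  proof (rule inj_onI)
    fix a b assume a: "a \<in> {1..M1}" and b: "b \<in> {1..M1}" and e: "E1 a = E1 b"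
    have "1 \<in> {1..M2}" using c by simp
    then show "a = b" using c(5) a b e by metis
  qed
  then have 1: "M1 \<le> card (words Q n)" using card_inj_on_le[of E1 "{1..M1}" "words Q n"] c finite_words by auto
  have "inj_on E2 {1..M2}"
  proof (rule inj_onI)
    fix a b assume a: "a \<in> {1..M2}" and b: "b \<in> {1..M2}" and e: "E2 a = E2 b"
    have "1 \<in> {1..M1}" using c by simp
    then show "a = b" using c(5) a b e by metis
  qed
  then have 2: "M2 \<le> card (words Q n)" using card_inj_on_le[of E2 "{1..M2}" "words Q n"] c finite_words by auto
  show ?thesis using 1 2 by simp
qed

lemma rate_bdd:
  "bdd_above {log 2 (real (M1 * M2)) / real n | M1 M2.
            \<exists>E1 E2 D1 D2. zero_error_code Q W n M1 M2 E1 E2 D1 D2}"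
proof (rule bdd_aboveI)
  fix r assume "r \<in> {log 2 (real (M1 * M2)) / real n | M1 M2.
            \<exists>E1 E2 D1 D2. zero_error_code Q W n M1 M2 E1 E2 D1 D2}"
  then obtain M1 M2 E1 E2 D1 D2 where r: "r = log 2 (real (M1 * M2)) / real n"
    and z: "zero_error_code Q W n M1 M2 E1 E2 D1 D2" by blast
  let ?N = "card (words Q n)"
  have b: "M1 \<le> ?N" "M2 \<le> ?N" using code_bound[OF z] by auto
  have p: "M1 \<ge> 1" "M2 \<ge> 1" using z unfolding zero_error_code_def by auto
  have "real (M1 * M2) \<le> real (?N * ?N)" using b by (intro of_nat_mono mult_le_mono)
  moreover have "real (M1 * M2) > 0" using p by simp
  ultimately have "log 2 (real (M1 * M2)) \<le> log 2 (real (?N * ?N))" by simp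
  then show "r \<le> log 2 (real (?N * ?N)) / real n" unfolding r by (simp add: divide_right_mono)
qed


lemma powr_Q: "real ((2::nat) ^ q) powr a = 2 powr (real q * a)"
  by (simp add: powr_realpow[symmetric] powr_powr)

lemma side_bound:
  fixes q n :: nat and a t :: real and M :: nat and C :: real
  assumes C: "C \<ge> real ((2::nat)^q) powr a" and CM: "C \<le> real M * (2 ^ n * real ((2::nat)^q) powr t)"
  shows "log 2 (real M) \<ge> real q * a - real n - real q * t" and "M \<ge> 1"
proof -
  have "2 powr (real q * a) \<le> real M * (2 powr (real n) * 2 powr (real q * t))"
  proof -
    have c1: "2 powr (real q * a) \<le> C" using C unfolding powr_Q .
    have c2: "C \<le> real M * (2 ^ n * 2 powr (real q * t))" using CM unfolding powr_Q .
    have "(2::real) ^ n = 2 powr real n" by (simp add: powr_realpow)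
    then show ?thesis using c1 c2 by simp
  qed
  also have "\<dots> = real M * 2 powr (real n + real q * t)" by (simp add: powr_add)
  finally have h: "2 powr (real q * a) \<le> real M * 2 powr (real n + real q * t)" .
  have Mpos: "real M > 0"
  proof (rule ccontr)
    assume "\<not> real M > 0" then have "M = 0" by simp
    then show False using h by simp
  qed
  then show "M \<ge> 1" by simp
  have "log 2 (2 powr (real q * a)) \<le> log 2 (real M * 2 powr (real n + real q * t))"
    using h Mpos by (subst log_le_cancel_iff) auto
  also have "\<dots> = log 2 (real M) + (real n + real q * t)"
    using Mpos by (simp add: log_mult)
  finally show "log 2 (real M) \<ge> real q * a - real n - real q * t" by simp
qed

theorem theorem2:
  fixes q n :: nat and \<gamma> \<epsilon> \<delta>1 \<delta>2 \<delta> :: real and A B :: "nat list set"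
  defines "Q \<equiv> 2 ^ q"
  assumes "q \<ge> 1" and "n \<ge> 1" and "\<gamma> \<ge> 0" and "0 \<le> \<epsilon>" and "\<epsilon> \<le> 1"
    and "\<delta>1 \<ge> 0" and "\<delta>2 \<ge> 0"
    and "A \<subseteq> words Q n" and "B \<subseteq> words Q n"
    and "gamma_uniform_sets Q n \<gamma> A B"
    and "real (card A) \<ge> real Q powr (real n * (1 - \<delta>1))"
    and "real (card B) \<ge> real Q powr (real n * (1 - \<delta>2))"
    and "\<delta> > 0"
  shows "measure_pmf.prob (erasure_pattern_pmf Q \<epsilon>)
           {S. zero_error_rate Q (erasure_channel S) n \<ge>
                 2 * real q * (1 - ((\<delta>1 + \<delta>2) / 2 + 2 * (1 + \<gamma>) * \<epsilon> + \<delta>)) - 2}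
         \<ge> 1 / 2"
proof -
  note as = assms(2-14)
  have Q1: "Q \<ge> 1" unfolding Q_def by simp
  have Qpos: "real Q > 0" using Q1 by simp
  define c where "c = real Q ^ 2 * (2 * \<epsilon> + \<delta> / (1 + \<gamma>))"
  define t where "t = (2 * (1 + \<gamma>) * \<epsilon> + \<delta>) * real n"
  have c0: "c > 0" unfolding c_def using as Qpos by (intro mult_pos_pos add_nonneg_pos) auto
  have ce: "2 * \<epsilon> * real Q ^ 2 \<le> c" unfolding c_def using as Qpos
    by (simp add: algebra_simps)
  have t0: "t \<ge> 0" unfolding t_def using as by simp
  have ct: "c * ((1 + \<gamma>) * real n / real Q ^ 2) = t"
  proof -
    have g: "1 + \<gamma> \<noteq> 0" using as by simp
    have q2: "real Q ^ 2 \<noteq> 0" using Qpos by simp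
    have "c * ((1 + \<gamma>) * real n / real Q ^ 2) = (2 * \<epsilon> + \<delta> / (1 + \<gamma>)) * (1 + \<gamma>) * real n"
      unfolding c_def using q2 by simp
    also have "(2 * \<epsilon> + \<delta> / (1 + \<gamma>)) * (1 + \<gamma>) = 2 * (1 + \<gamma>) * \<epsilon> + \<delta>"
    proof -
      have "\<delta> / (1 + \<gamma>) * (1 + \<gamma>) = \<delta>" using g by simp
      then show ?thesis by (simp only: distrib_right) (simp add: algebra_simps)
    qed
    finally show ?thesis unfolding t_def by simp
  qed
  define target where "target = 2 * real q * (1 - ((\<delta>1 + \<delta>2) / 2 + 2 * (1 + \<gamma>) * \<epsilon> + \<delta>)) - 2"
  have finA: "finite A" using as(8) finite_words finite_subset by blast
  have finB: "finite B" using as(9) finite_words finite_subset by blast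
  have good: "zero_error_rate Q (erasure_channel S) n \<ge> target"
    if K: "real (card {p \<in> alph Q \<times> alph Q. S p}) \<le> c" for S
  proof -
    obtain A1 where A1: "A1 \<subseteq> A" "hsep n t A1" "real (card A) \<le> real (card A1) * (2 ^ n * real Q powr t)"
      using greedy_card[OF finA as(8) t0 Q1] by blast
    obtain B1 where B1: "B1 \<subseteq> B" "hsep n t B1" "real (card B) \<le> real (card B1) * (2 ^ n * real Q powr t)"
      using greedy_card[OF finB as(9) t0 Q1] by blast
    have sA: "log 2 (real (card A1)) \<ge> real q * (real n * (1 - \<delta>1)) - real n - real q * t"
      and A1ne: "card A1 \<ge> 1"
      using side_bound[OF as(11)[unfolded Q_def] A1(3)[unfolded Q_def]] by auto
    have sB: "log 2 (real (card B1)) \<ge> real q * (real n * (1 - \<delta>2)) - real n - real q * t"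
      and B1ne: "card B1 \<ge> 1"
      using side_bound[OF as(12)[unfolded Q_def] B1(3)[unfolded Q_def]] by auto
    have erase: "real (card {i. i < n \<and> S (x!i, y!i)}) \<le> t" if "x \<in> A" "y \<in> B" for x y
    proof -
      have "gamma_uniform_pair Q n \<gamma> x y" using as(10) that unfolding gamma_uniform_sets_def by blast
      then have "real (card {i. i < n \<and> S (x!i, y!i)}) \<le>
           real (card {p \<in> alph Q \<times> alph Q. S p}) * ((1 + \<gamma>) * real n / real Q ^ 2)"
        using erase_count that as(8,9) by blast
      also have "\<dots> \<le> c * ((1 + \<gamma>) * real n / real Q ^ 2)"
        using K as by (intro mult_right_mono) auto
      finally show ?thesis using ct by simp
    qed
    have finE: "finite {i. i < n \<and> S (x!i, y!i)}" for x y by simp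
    have i1: "x = x'" if "x \<in> A1" "x' \<in> A1" "y \<in> B1" "y' \<in> B1"
      "chan_n (erasure_channel S) 1 x y = chan_n (erasure_channel S) 1 x' y'" for x x' y y'
    proof (rule ccontr)
      assume ne: "x \<noteq> x'"
      have w: "x \<in> words Q n" "x' \<in> words Q n" "y \<in> words Q n" "y' \<in> words Q n"
        using that A1 B1 as(8,9) by auto
      have "hdist n x x' \<le> card {i. i < n \<and> S (x!i, y!i)}"
        unfolding hdist_def using decode1[OF w that(5)] finE by (rule card_mono[rotated])
      then have "real (hdist n x x') \<le> t" using erase[of x y] that A1 B1 by force
      then show False using A1(2) ne that unfolding hsep_def by force
    qed
    have i2: "y = y'" if "x \<in> A1" "x' \<in> A1" "y \<in> B1" "y' \<in> B1"
      "chan_n (erasure_channel S) 2 x y = chan_n (erasure_channel S) 2 x' y'" for x x' y y'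
    proof (rule ccontr)
      assume ne: "y \<noteq> y'"
      have w: "x \<in> words Q n" "x' \<in> words Q n" "y \<in> words Q n" "y' \<in> words Q n"
        using that A1 B1 as(8,9) by auto
      have "hdist n y y' \<le> card {i. i < n \<and> S (x!i, y!i)}"
        unfolding hdist_def using decode2[OF w that(5)] finE by (rule card_mono[rotated])
      then have "real (hdist n y y') \<le> t" using erase[of x y] that A1 B1 by force
      then show False using B1(2) ne that unfolding hsep_def by force
    qed
    have finA1: "finite A1" using A1(1) finA finite_subset by blast
    have finB1: "finite B1" using B1(1) finB finite_subset by blast
    have A1n: "A1 \<noteq> {}" using A1ne by auto
    have B1n: "B1 \<noteq> {}" using B1ne by auto
    obtain E1 E2 D1 D2 where code: "zero_error_code Q (erasure_channel S) n (card A1) (card B1) E1 E2 D1 D2"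
    proof -
      have AW1: "A1 \<subseteq> words Q n" using A1(1) as(8) by blast
      have BW1: "B1 \<subseteq> words Q n" using B1(1) as(9) by blast
      have "\<exists>E1 E2 D1 D2. zero_error_code Q (erasure_channel S) n (card A1) (card B1) E1 E2 D1 D2"
      proof (rule code_exists[of A1 B1 Q n "erasure_channel S", OF finA1 A1n finB1 B1n AW1 BW1])
        show "x = x'" if "x \<in> A1" "x' \<in> A1" "y \<in> B1" "y' \<in> B1"
          "chan_n (erasure_channel S) 1 x y = chan_n (erasure_channel S) 1 x' y'" for x x' y y'
          using i1[OF that] .
        show "y = y'" if "x \<in> A1" "x' \<in> A1" "y \<in> B1" "y' \<in> B1"
          "chan_n (erasure_channel S) 2 x y = chan_n (erasure_channel S) 2 x' y'" for x x' y y'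
          using i2[OF that] .
      qed
      then show ?thesis using that by blast
    qed
    define r where "r = log 2 (real (card A1 * card B1)) / real n"
    have rin: "r \<in> {log 2 (real (M1 * M2)) / real n | M1 M2.
            \<exists>E1 E2 D1 D2. zero_error_code Q (erasure_channel S) n M1 M2 E1 E2 D1 D2}"
      unfolding r_def using code by blast
    have rle: "r \<le> zero_error_rate Q (erasure_channel S) n"
      unfolding zero_error_rate_def by (rule cSup_upper[OF rin rate_bdd])
    have "log 2 (real (card A1 * card B1)) = log 2 (real (card A1)) + log 2 (real (card B1))"
      using A1ne B1ne by (simp add: log_mult)
    also have "\<dots> \<ge> real n * target"
    proof -
      have "real n * target = (real q * (real n * (1 - \<delta>1)) - real n - real q * t)
              + (real q * (real n * (1 - \<delta>2)) - real n - real q * t)"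
        unfolding target_def t_def by (simp add: field_simps)
      then show ?thesis using sA sB by linarith
    qed
    finally have "real n * target \<le> log 2 (real (card A1 * card B1))" .
    then have "target \<le> r" unfolding r_def using as(2) by (simp add: field_simps)
    then show ?thesis using rle by simp
  qed
  have "1/2 \<le> measure_pmf.prob (erasure_pattern_pmf Q \<epsilon>) {S. real (card {p \<in> alph Q \<times> alph Q. S p}) \<le> c}"
    by (rule prob_part[OF as(4,5) c0 ce])
  also have "\<dots> \<le> measure_pmf.prob (erasure_pattern_pmf Q \<epsilon>) {S. zero_error_rate Q (erasure_channel S) n \<ge> target}"
    by (rule measure_pmf.finite_measure_mono) (auto intro: good)
  finally show ?thesis unfolding target_def .
qed

end
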